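(* Let $G$ be a (nonempty) subgraph of $Q_n$ with average degree $d$. For each vertex $v$ of $G$, let $|L_G(v)|$ denote the maximum length of an increasing geodesic in $G$ ending at $v$. Then $$\sum_{v\in V(G)} |L_G(v)| \ge d\,|V(G)|.$$
   Context: The hypercube $Q_n$ has vertex set $\{0,1\}^n$, two vertices adjacent iff they differ in exactly one coordinate; the direction of an edge is that coordinate in $\{1,\dots,n\}$. A path $P=x_1x_2\ldots x_l$ in $Q_n$ is an increasing geodesic if the directions of the edges $x_ix_{i+1}$ strictly increase with $i$; it ends at $x_l$. The single-vertex path $x_1$ is an increasing geodesic of length $0$ ending at $x_1$. Length means number of edges. The average degree of $G$ is $2|E(G)|/|V(G)|$. *)

theory Defs
  imports Complex_Main
begin

text \<open>Vertices of Q_n: a vertex x in {0,1}^n is encoded as the set of coordinates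
  i in {1..n} with x_i = 1, i.e. as a subset of {1..n}.\<close>

definition hc_vertex :: "nat \<Rightarrow> nat set \<Rightarrow> bool" where
  "hc_vertex n x \<longleftrightarrow> x \<subseteq> {1..n}"

definition hc_adj :: "nat \<Rightarrow> nat set \<Rightarrow> nat set \<Rightarrow> bool" where
  "hc_adj n x y \<longleftrightarrow> hc_vertex n x \<and> hc_vertex n y \<and> card ((x - y) \<union> (y - x)) = 1"

definition direction :: "nat set \<Rightarrow> nat set \<Rightarrow> nat" where
  "direction x y = the_elem ((x - y) \<union> (y - x))"

definition hc_subgraph :: "nat \<Rightarrow> nat set set \<Rightarrow> nat set set set \<Rightarrow> bool" where
  "hc_subgraph n V E \<longleftrightarrow> (\<forall>x\<in>V. hc_vertex n x) \<and>
     E \<subseteq> {{x, y} | x y. x \<in> V \<and> y \<in> V \<and> hc_adj n x y}"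

definition inc_geodesic :: "nat set set \<Rightarrow> nat set set set \<Rightarrow> nat set list \<Rightarrow> bool" where
  "inc_geodesic V E xs \<longleftrightarrow> xs \<noteq> [] \<and> set xs \<subseteq> V \<and>
     (\<forall>i. i + 1 < length xs \<longrightarrow> {xs ! i, xs ! (i + 1)} \<in> E) \<and>
     (\<forall>i. i + 2 < length xs \<longrightarrow>
        direction (xs ! i) (xs ! (i + 1)) < direction (xs ! (i + 1)) (xs ! (i + 2)))"

definition max_inc_len :: "nat set set \<Rightarrow> nat set set set \<Rightarrow> nat set \<Rightarrow> nat" where
  "max_inc_len V E v = Max {length xs - 1 | xs. inc_geodesic V E xs \<and> last xs = v}"

definition avg_degree :: "nat set set \<Rightarrow> nat set set set \<Rightarrow> real" where
  "avg_degree V E = 2 * real (card E) / real (card V)"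

end

theory Submission imports Defs begin


definition sd :: "nat set \<Rightarrow> nat \<Rightarrow> nat set" where
  "sd v j = (if j \<in> v then v - {j} else insert j v)"

lemma sd_sd[simp]: "sd (sd v j) j = v"
  unfolding sd_def by auto

lemma sd_diff: "(v - sd v j) \<union> (sd v j - v) = {j}"
  unfolding sd_def by auto

lemma sd_diff2: "(sd v j - v) \<union> (v - sd v j) = {j}"
  unfolding sd_def by auto

lemma dir_sd[simp]: "direction v (sd v j) = j" "direction (sd v j) v = j"
  unfolding direction_def by (simp_all add: sd_diff sd_diff2)

lemma sd_inj: "sd v j = sd v j' \<Longrightarrow> j = j'"
  by (metis dir_sd(1))

lemma adj_sd:
  assumes "hc_adj n v w" shows "\<exists>j\<in>{1..n}. w = sd v j"
proof -
  have c: "card ((v - w) \<union> (w - v)) = 1" using assms unfolding hc_adj_def by blast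
  have hv: "v \<subseteq> {1..n}" and hw: "w \<subseteq> {1..n}" using assms unfolding hc_adj_def hc_vertex_def by blast+
  from c obtain j where j: "(v - w) \<union> (w - v) = {j}" by (rule card_1_singletonE)
  have jn: "j \<in> {1..n}" using hv hw j by blast
  have nj: "x \<notin> (v - w) \<union> (w - v)" if "x \<noteq> j" for x using j that by simp
  have eq: "x \<in> w \<longleftrightarrow> x \<in> v" if "x \<noteq> j" for x using nj[OF that] by blast
  have jj: "j \<in> v \<longleftrightarrow> j \<notin> w" using j by blast
  have "w = sd v j"
  proof (rule set_eqI)
    fix x show "x \<in> w \<longleftrightarrow> x \<in> sd v j"
    proof (cases "x = j")
      case True then show ?thesis using jj unfolding sd_def by auto
    next
      case False then show ?thesis using eq[OF False] unfolding sd_def by auto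
    qed
  qed
  then show ?thesis using jn by blast
qed

lemma adj_sym: "hc_adj n v w \<Longrightarrow> hc_adj n w v"
  unfolding hc_adj_def by (simp add: Un_commute)

lemma edge_facts:
  assumes "hc_subgraph n V E" "{v,w} \<in> E"
  shows "v \<in> V" "w \<in> V" "hc_adj n v w"
proof -
  from assms obtain x y where "{v,w} = {x,y}" "x \<in> V" "y \<in> V" "hc_adj n x y"
    unfolding hc_subgraph_def by blast
  then have "(v = x \<and> w = y) \<or> (v = y \<and> w = x)" by (simp add: doubleton_eq_iff)
  then show "v \<in> V" "w \<in> V" "hc_adj n v w"
    using \<open>x \<in> V\<close> \<open>y \<in> V\<close> \<open>hc_adj n x y\<close> adj_sym by blast+
qed

lemma edge_sd:
  assumes "hc_subgraph n V E" "{v,w} \<in> E"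
  shows "\<exists>j\<in>{1..n}. w = sd v j"
  using edge_facts[OF assms] adj_sd by blast

lemma edge_dir:
  assumes "hc_subgraph n V E" "{v,w} \<in> E"
  shows "direction v w \<in> {1..n}"
  using edge_sd[OF assms] by auto

lemma finV: "hc_subgraph n V E \<Longrightarrow> finite V"
  unfolding hc_subgraph_def hc_vertex_def
  by (rule finite_subset[of _ "Pow {1..n}"]) auto

lemma finE: assumes "hc_subgraph n V E" shows "finite E"
proof (rule finite_subset[of _ "Pow V"])
  show "E \<subseteq> Pow V" using assms unfolding hc_subgraph_def by blast
  show "finite (Pow V)" using finV[OF assms] by simp
qed



primrec hh :: "nat set set set \<Rightarrow> nat \<Rightarrow> nat set \<Rightarrow> nat" where
  "hh E 0 v = 0"
| "hh E (Suc k) v = (if {v, sd v (Suc k)} \<in> E then max (hh E k v) (hh E k (sd v (Suc k)) + 1) else hh E k v)"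

lemma geo_snoc:
  assumes g: "inc_geodesic V E xs" and v: "v \<in> V" and e: "{last xs, v} \<in> E"
    and d: "\<forall>i. i + 1 < length xs \<longrightarrow> direction (xs!i) (xs!(i+1)) < direction (last xs) v"
  shows "inc_geodesic V E (xs @ [v])"
proof -
  have ne: "xs \<noteq> []" and s: "set xs \<subseteq> V"
    and ed: "\<forall>i. i + 1 < length xs \<longrightarrow> {xs ! i, xs ! (i + 1)} \<in> E"
    and inc: "\<forall>i. i + 2 < length xs \<longrightarrow>
        direction (xs ! i) (xs ! (i + 1)) < direction (xs ! (i + 1)) (xs ! (i + 2))"
    using g unfolding inc_geodesic_def by auto
  have L: "last xs = xs ! (length xs - 1)" using ne by (simp add: last_conv_nth)
  have E2: "{(xs@[v]) ! i, (xs@[v]) ! (i + 1)} \<in> E" if "i + 1 < length (xs@[v])" for i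
  proof (cases "i + 1 < length xs")
    case True then show ?thesis using ed by (simp add: nth_append)
  next
    case False
    then have "i = length xs - 1" using that by simp
    then show ?thesis using e L ne False by (simp add: nth_append)
  qed
  have I2: "direction ((xs@[v]) ! i) ((xs@[v]) ! (i + 1)) < direction ((xs@[v]) ! (i + 1)) ((xs@[v]) ! (i + 2))"
    if "i + 2 < length (xs@[v])" for i
  proof (cases "i + 2 < length xs")
    case True then show ?thesis using inc by (simp add: nth_append)
  next
    case False
    then have i: "i + 2 = length xs" using that by simp
    then have l1: "length xs - 1 = i + 1" by simp
    then have lx: "last xs = xs ! (i+1)" using L by simp
    have "(xs@[v]) ! (i+2) = v" using i by (simp add: nth_append)
    moreover have "(xs@[v]) ! (i+1) = last xs" using i lx by (simp add: nth_append)
    moreover have "(xs@[v]) ! i = xs ! i" using i by (simp add: nth_append)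
    moreover note lx
    ultimately show ?thesis using d i by auto
  qed
  show ?thesis unfolding inc_geodesic_def using s v E2 I2 by auto
qed

lemma geo_exists:
  assumes G: "hc_subgraph n V E"
  shows "v \<in> V \<Longrightarrow> \<exists>xs. inc_geodesic V E xs \<and> last xs = v \<and> length xs = hh E k v + 1 \<and>
     (\<forall>i. i + 1 < length xs \<longrightarrow> direction (xs!i) (xs!(i+1)) \<le> k)"
proof (induction k arbitrary: v)
  case 0
  show ?case
    by (rule exI[of _ "[v]"]) (use 0 in \<open>auto simp: inc_geodesic_def\<close>)
next
  case (Suc k)
  let ?w = "sd v (Suc k)"
  show ?case
  proof (cases "{v, ?w} \<in> E \<and> hh E k v < hh E k ?w + 1")
    case False
    then have "hh E (Suc k) v = hh E k v" by auto
    with Suc.IH[OF Suc.prems] show ?thesis by (metis le_SucI)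
  next
    case True
    then have eq: "hh E (Suc k) v = hh E k ?w + 1" by auto
    have wV: "?w \<in> V" using edge_facts(2)[OF G] True by blast
    obtain xs where xs: "inc_geodesic V E xs" "last xs = ?w" "length xs = hh E k ?w + 1"
      "\<forall>i. i + 1 < length xs \<longrightarrow> direction (xs!i) (xs!(i+1)) \<le> k"
      using Suc.IH[OF wV] by blast
    have e: "{last xs, v} \<in> E" using True xs(2) by (simp add: insert_commute)
    have dl: "direction (last xs) v = Suc k" using xs(2) by simp
    have g: "inc_geodesic V E (xs @ [v])"
      by (rule geo_snoc[OF xs(1) Suc.prems e]) (use xs(4) dl in auto)
    have ne: "xs \<noteq> []" using xs(3) by auto
    have D: "direction ((xs@[v])!i) ((xs@[v])!(i+1)) \<le> Suc k" if "i + 1 < length (xs@[v])" for i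
    proof (cases "i + 1 < length xs")
      case True then show ?thesis using xs(4)[rule_format, of i] by (simp add: nth_append)
    next
      case False
      then have "i = length xs - 1" using that by simp
      then show ?thesis using dl ne False by (simp add: nth_append last_conv_nth)
    qed
    show ?thesis
      by (rule exI[of _ "xs @ [v]"]) (use g D xs eq in auto)
  qed
qed

lemma geo_len:
  assumes G: "hc_subgraph n V E" and g: "inc_geodesic V E xs"
  shows "length xs - 1 \<le> n"
proof -
  define m where "m = length xs - 1"
  define d where "d i = direction (xs!i) (xs!(i+1))" for i
  have ed: "\<And>i. i < m \<Longrightarrow> {xs ! i, xs ! (i + 1)} \<in> E"
  proof -
    fix i assume "i < m"
    then have "i + 1 < length xs" unfolding m_def by linarith
    then show "{xs ! i, xs ! (i + 1)} \<in> E" using g unfolding inc_geodesic_def by blast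
  qed
  have inc: "d i < d (i+1)" if "i + 1 < m" for i
  proof -
    from that have "i + 2 < length xs" unfolding m_def by linarith
    then have "direction (xs ! i) (xs ! (i + 1)) < direction (xs ! (i + 1)) (xs ! (i + 2))"
      using g unfolding inc_geodesic_def by blast
    moreover have "i + 1 + 1 = i + 2" by simp
    ultimately show ?thesis unfolding d_def by metis
  qed
  have mono: "i < j \<longrightarrow> j < m \<longrightarrow> d i < d j" for i j
  proof (induction j)
    case 0 then show ?case by simp
  next
    case (Suc j)
    show ?case
    proof (intro impI)
      assume a: "i < Suc j" "Suc j < m"
      have "d j < d (Suc j)" using inc[of j] a(2) by simp
      moreover have "i = j \<or> d i < d j" using Suc a by linarith
      ultimately show "d i < d (Suc j)" by auto
    qed
  qed
  have "inj_on d {..<m}"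
  proof (rule inj_onI)
    fix x y assume "x \<in> {..<m}" "y \<in> {..<m}" "d x = d y"
    then show "x = y" using mono[of x y] mono[of y x] by (cases "x < y"; cases "y < x") auto
  qed
  moreover have "d ` {..<m} \<subseteq> {1..n}"
    using edge_dir[OF G ed] d_def by auto
  ultimately have "card {..<m} \<le> card {1..n}"
    by (meson card_inj_on_le finite_atLeastAtMost)
  then show ?thesis by (simp add: m_def)
qed

lemma hh_le:
  assumes G: "hc_subgraph n V E" and v: "v \<in> V"
  shows "hh E k v \<le> max_inc_len V E v"
proof -
  obtain xs where xs: "inc_geodesic V E xs" "last xs = v" "length xs = hh E k v + 1"
    using geo_exists[OF G v] by blast
  have fin: "finite {length xs - 1 | xs. inc_geodesic V E xs \<and> last xs = v}"
    by (rule finite_subset[of _ "{..n}"]) (use geo_len[OF G] in auto)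
  have "hh E k v \<in> {length xs - 1 | xs. inc_geodesic V E xs \<and> last xs = v}"
    using xs by force
  then show ?thesis unfolding max_inc_len_def using fin by (rule Max_ge[rotated])
qed


definition SS :: "nat set set \<Rightarrow> nat set set set \<Rightarrow> nat \<Rightarrow> nat set set" where
  "SS V E j = {v\<in>V. {v, sd v j} \<in> E}"

lemma edge_rep:
  assumes G: "hc_subgraph n V E" and e: "e \<in> E"
  shows "\<exists>x y. e = {x,y} \<and> hc_adj n x y"
proof -
  have "e \<in> {{x, y} | x y. x \<in> V \<and> y \<in> V \<and> hc_adj n x y}"
    using G e unfolding hc_subgraph_def by blast
  then show ?thesis by blast
qed

lemma pairs2:
  assumes "x \<noteq> y" shows "{(v,w). {v,w} = {x,y}} = {(x,y),(y,x)}"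
proof (rule set_eqI)
  fix p :: "'a \<times> 'a"
  obtain a b where p: "p = (a,b)" by (cases p)
  have "{a,b} = {x,y} \<longleftrightarrow> (a = x \<and> b = y) \<or> (a = y \<and> b = x)" by (rule doubleton_eq_iff)
  then show "p \<in> {(v,w). {v,w} = {x,y}} \<longleftrightarrow> p \<in> {(x,y),(y,x)}" using p by auto
qed

lemma count:
  assumes G: "hc_subgraph n V E"
  shows "2 * card E = (\<Sum>j\<in>{1..n}. card (SS V E j))"
proof -
  define A where "A = {(v,w). {v,w} \<in> E}"
  have fE: "finite E" using finE[OF G] .
  have fV: "finite V" using finV[OF G] .
  have piece: "\<exists>x y. x \<noteq> y \<and> {(v,w). {v,w} = e} = {(x,y),(y,x)}" if eE: "e \<in> E" for e
  proof -
    obtain x y where xy: "e = {x,y}" "hc_adj n x y" using edge_rep[OF G eE] by blast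
    then have "x \<noteq> y" unfolding hc_adj_def by auto
    then show ?thesis using xy(1) pairs2 by blast
  qed
  have fin: "finite {(v,w). {v,w} = e}" if eE: "e \<in> E" for e
  proof -
    obtain x y where "{(v,w). {v,w} = e} = {(x,y),(y,x)}" using piece[OF eE] by blast
    then show ?thesis by simp
  qed
  have c2: "card {(v,w). {v,w} = e} = 2" if eE: "e \<in> E" for e
  proof -
    obtain x y where "x \<noteq> y" "{(v,w). {v,w} = e} = {(x,y),(y,x)}" using piece[OF eE] by blast
    then show ?thesis by simp
  qed
  have A1: "A = (\<Union>e\<in>E. {(v,w). {v,w} = e})" unfolding A_def by blast
  have "card A = (\<Sum>e\<in>E. card {(v,w). {v,w} = e})"
    unfolding A1
  proof (rule card_UN_disjoint[OF fE])
    show "\<forall>e\<in>E. finite {(v,w). {v,w} = e}" using fin by blast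
    show "\<forall>i\<in>E. \<forall>j\<in>E. i \<noteq> j \<longrightarrow> {(v,w). {v,w} = i} \<inter> {(v,w). {v,w} = j} = {}" by blast
  qed
  also have "\<dots> = (\<Sum>e\<in>E. 2)" by (rule sum.cong[OF refl]) (rule c2)
  finally have cA: "card A = 2 * card E" by simp
  define B where "B = (SIGMA j:{1..n}. SS V E j)"
  define f where "f = (\<lambda>(j::nat,v::nat set). (v, sd v j))"
  have inj: "inj_on f B"
  proof (rule inj_onI)
    fix p q assume "p \<in> B" "q \<in> B" "f p = f q"
    obtain j v where p: "p = (j,v)" by (cases p)
    obtain j' v' where q: "q = (j',v')" by (cases q)
    have fp: "f p = (v, sd v j)" unfolding p f_def by simp
    have fq: "f q = (v', sd v' j')" unfolding q f_def by simp
    have vv: "v = v' \<and> sd v j = sd v' j'" using \<open>f p = f q\<close> unfolding fp fq by (rule Pair_inject) blast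
    then have "v = v'" by blast
    from vv have "sd v j = sd v j'" by metis
    then have "j = j'" by (rule sd_inj)
    then show "p = q" using p q \<open>v = v'\<close> by simp
  qed
  have img: "f ` B = A"
  proof
    show "f ` B \<subseteq> A"
    proof
      fix p assume "p \<in> f ` B"
      then obtain j v where "(j,v) \<in> B" "p = (v, sd v j)" unfolding f_def by auto
      then show "p \<in> A" unfolding A_def B_def SS_def by simp
    qed
    show "A \<subseteq> f ` B"
    proof
      fix p assume "p \<in> A"
      then obtain v w where p: "p = (v,w)" "{v,w} \<in> E" unfolding A_def by auto
      then obtain j where j: "j \<in> {1..n}" "w = sd v j" using edge_sd[OF G] by blast
      have "v \<in> V" using edge_facts(1)[OF G p(2)] .
      then have "(j,v) \<in> B" using j p unfolding B_def SS_def by simp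
      moreover have "f (j,v) = p" using j p unfolding f_def by simp
      ultimately show "p \<in> f ` B" by (metis imageI)
    qed
  qed
  have fS: "\<forall>j\<in>{1..n}. finite (SS V E j)" using fV unfolding SS_def by simp
  have "card B = (\<Sum>j\<in>{1..n}. card (SS V E j))"
    unfolding B_def by (rule card_SigmaI[OF _ fS]) simp
  moreover have "card A = card B" using card_image[OF inj] img by simp
  ultimately show ?thesis using cA by simp
qed
lemma step:
  assumes G: "hc_subgraph n V E"
  shows "(\<Sum>v\<in>V. hh E k v) + card (SS V E (Suc k)) \<le> (\<Sum>v\<in>V. hh E (Suc k) v)"
proof -
  let ?s = "\<lambda>v. sd v (Suc k)"
  let ?S = "SS V E (Suc k)"
  have fV: "finite V" using finV[OF G] .
  have SV: "?S \<subseteq> V" unfolding SS_def by auto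
  have fS: "finite ?S" using fV SV finite_subset by blast
  have sS: "?s v \<in> ?S" if "v \<in> ?S" for v
  proof -
    have e: "{v, ?s v} \<in> E" using that unfolding SS_def by auto
    then have "?s v \<in> V" using edge_facts(2)[OF G] by blast
    moreover have "{?s v, ?s (?s v)} \<in> E" using e by (simp add: insert_commute)
    ultimately show ?thesis unfolding SS_def by auto
  qed
  have rx: "(\<Sum>v\<in>?S. f (?s v)) = (\<Sum>v\<in>?S. f v)" for f :: "nat set \<Rightarrow> nat"
    by (rule sum.reindex_bij_witness[of _ ?s ?s]) (auto intro: sS)
  have pt: "hh E k v + hh E k (?s v) + 2 \<le> hh E (Suc k) v + hh E (Suc k) (?s v)" if "v \<in> ?S" for v
  proof -
    have e: "{v, ?s v} \<in> E" using that unfolding SS_def by auto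
    have e2: "{?s v, ?s (?s v)} \<in> E" using e by (simp add: insert_commute)
    have "hh E (Suc k) v = max (hh E k v) (hh E k (?s v) + 1)" using e by simp
    moreover have "hh E (Suc k) (?s v) = max (hh E k (?s v)) (hh E k v + 1)" using e2 by simp
    ultimately show ?thesis by linarith
  qed
  have "2 * (\<Sum>v\<in>?S. hh E k v) + 2 * card ?S = (\<Sum>v\<in>?S. hh E k v + hh E k (?s v) + 2)"
  proof -
    have "(\<Sum>v\<in>?S. hh E k v + hh E k (?s v) + 2) = (\<Sum>v\<in>?S. hh E k v) + (\<Sum>v\<in>?S. hh E k (?s v)) + (\<Sum>v\<in>?S. 2)"
      by (simp only: sum.distrib)
    then show ?thesis using rx[of "hh E k"] by simp
  qed
  also have "\<dots> \<le> (\<Sum>v\<in>?S. hh E (Suc k) v + hh E (Suc k) (?s v))"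
    by (rule sum_mono) (rule pt)
  also have "\<dots> = 2 * (\<Sum>v\<in>?S. hh E (Suc k) v)"
    using rx[of "hh E (Suc k)"] by (simp only: sum.distrib mult_2)
  finally have A: "(\<Sum>v\<in>?S. hh E k v) + card ?S \<le> (\<Sum>v\<in>?S. hh E (Suc k) v)" by simp
  have B: "(\<Sum>v\<in>V - ?S. hh E k v) = (\<Sum>v\<in>V - ?S. hh E (Suc k) v)"
    by (rule sum.cong) (auto simp: SS_def)
  have "(\<Sum>v\<in>V. hh E k v) = (\<Sum>v\<in>?S. hh E k v) + (\<Sum>v\<in>V - ?S. hh E k v)"
    using sum.subset_diff[OF SV fV] by (simp add: add.commute)
  moreover have "(\<Sum>v\<in>V. hh E (Suc k) v) = (\<Sum>v\<in>?S. hh E (Suc k) v) + (\<Sum>v\<in>V - ?S. hh E (Suc k) v)"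
    using sum.subset_diff[OF SV fV] by (simp add: add.commute)
  ultimately show ?thesis using A B by linarith
qed

lemma sum_bound:
  assumes G: "hc_subgraph n V E"
  shows "(\<Sum>j\<in>{1..k}. card (SS V E j)) \<le> (\<Sum>v\<in>V. hh E k v)"
proof (induction k)
  case 0 then show ?case by simp
next
  case (Suc k)
  have "{1..Suc k} = insert (Suc k) {1..k}" by auto
  then have "(\<Sum>j\<in>{1..Suc k}. card (SS V E j)) = card (SS V E (Suc k)) + (\<Sum>j\<in>{1..k}. card (SS V E j))"
    by simp
  then show ?case using Suc step[OF G, of k] by linarith
qed

theorem theorem4:
  fixes n :: nat and V :: "nat set set" and E :: "nat set set set"
  assumes "hc_subgraph n V E" and "V \<noteq> {}"
  shows "(\<Sum>v\<in>V. real (max_inc_len V E v)) \<ge> avg_degree V E * real (card V)"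
proof -
  have fV: "finite V" using finV[OF assms(1)] .
  then have "card V > 0" using assms(2) by (simp add: card_gt_0_iff)
  then have "avg_degree V E * real (card V) = real (2 * card E)"
    unfolding avg_degree_def by simp
  also have "\<dots> \<le> real (\<Sum>v\<in>V. hh E n v)"
  proof -
    have "2 * card E \<le> (\<Sum>v\<in>V. hh E n v)"
      using count[OF assms(1)] sum_bound[OF assms(1), of n] by linarith
    then show ?thesis by (simp only: of_nat_le_iff)
  qed
  also have "\<dots> = (\<Sum>v\<in>V. real (hh E n v))" by simp
  also have "\<dots> \<le> (\<Sum>v\<in>V. real (max_inc_len V E v))"
    by (rule sum_mono) (use hh_le[OF assms(1)] in simp)
  finally show ?thesis .
qed

end
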